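(* Let $\mathfrak{h}^s$ be a Hilbert space of dimension $d_s$ with orthonormal basis $|1\rangle,\dots,|d_s\rangle$, viewed as the fundamental representation of $\mathfrak{su}(\mathfrak{h}^s)$, and let $\hat{H}^1,\dots,\hat{H}^{d_s-1}$ be a Cartan subalgebra basis (a basis of the traceless operators diagonal in this basis). On $\bigotimes_{x=1}^N\mathfrak{h}^s_x$ let $\hat{H}^i_x$ denote $\hat{H}^i$ acting on site $x$ and $\hat{H}^i_{\mathrm{tot}}=\sum_{x=1}^N\hat{H}^i_x$. (1) Any linear operator $\hat{O}$ on $\bigotimes_{x=1}^N\mathfrak{h}^s_x$ commuting with all $\hat{H}^i_{\mathrm{tot}}$ ($1\le i\le d_s-1$) is a linear combination of operators of the form $\hat{p}\,\hat{\sigma}$, where $\hat{p}$ lies in the unital algebra generated by $\{\hat{H}^i_x:1\le i\le d_s-1,\ 1\le x\le N\}$ and $\sigma\in\mathfrak{S}_N$. (2) If $d_s=2$, then any linear operator $\hat{O}$ on $\bigotimes_{x=1}^N\mathfrak{h}^s_x$ can be written as $\hat{O}=\hat{O}_++\hat{O}_-$, where $\hat{O}_+$ is a linear combination of operators $\hat{p}\,\hat{\sigma}$ with $\hat{p}$ in the unital algebra generated by $\{\hat{\sigma}^3_x,\hat{\sigma}^+_x:1\le x\le N\}$ and $\sigma\in\mathfrak{S}_N$, and $\hat{O}_-$ is a linear combination of operators $\hat{p}\,\hat{\sigma}$ with $\hat{p}$ in the unital algebra generated by $\{\hat{\sigma}^3_x,\hat{\sigma}^-_x:1\le x\le N\}$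 and $\sigma\in\mathfrak{S}_N$.
   Context: For $\sigma\in\mathfrak{S}_N$, $\hat{\sigma}$ denotes the operator permuting tensor factors, $\hat{\sigma}\,|e_1\rangle\otimes\cdots\otimes|e_N\rangle=|e_{\sigma(1)}\rangle\otimes\cdots\otimes|e_{\sigma(N)}\rangle$. For $d_s=2$, $\hat{\sigma}^3$ is the Pauli-$z$ operator and $\hat{\sigma}^\pm$ the spin raising/lowering operators; a subscript $x$ means acting on site $x$. *)

theory Defs
  imports Complex_Main "HOL-Combinatorics.Permutations"
begin

text \<open>Sites are 0,...,N-1; the one-site basis |1>,...,|d> is indexed by 0,...,d-1.
  A basis vector of the N-site tensor product is a configuration c with
  c x < d for x < N (and c x = 0 for x >= N, for extensionality).
  Operators are given by their matrix entries T c c' = <c|T|c'>.\<close>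

type_synonym cfg = "nat \<Rightarrow> nat"
type_synonym op = "cfg \<Rightarrow> cfg \<Rightarrow> complex"

definition cfgs :: "nat \<Rightarrow> nat \<Rightarrow> cfg set" where
  "cfgs d N = {c. (\<forall>x<N. c x < d) \<and> (\<forall>x\<ge>N. c x = 0)}"

definition is_op :: "nat \<Rightarrow> nat \<Rightarrow> op \<Rightarrow> bool" where
  "is_op d N T \<longleftrightarrow> (\<forall>c c'. (c \<notin> cfgs d N \<or> c' \<notin> cfgs d N) \<longrightarrow> T c c' = 0)"

definition op_mul :: "nat \<Rightarrow> nat \<Rightarrow> op \<Rightarrow> op \<Rightarrow> op" where
  "op_mul d N A B = (\<lambda>c c'. \<Sum>c''\<in>cfgs d N. A c c'' * B c'' c')"

definition op_id :: "nat \<Rightarrow> nat \<Rightarrow> op" where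
  "op_id d N = (\<lambda>c c'. if c = c' \<and> c \<in> cfgs d N then 1 else 0)"

definition site_op :: "nat \<Rightarrow> nat \<Rightarrow> nat \<Rightarrow> (nat \<Rightarrow> nat \<Rightarrow> complex) \<Rightarrow> op" where
  "site_op d N x M = (\<lambda>c c'. if c \<in> cfgs d N \<and> c' \<in> cfgs d N \<and> (\<forall>y. y \<noteq> x \<longrightarrow> c y = c' y)
                            then M (c x) (c' x) else 0)"

text \<open>Permutation operator: sigma-hat |e_c(0) ... e_c(N-1)> = |e_c(sigma 0) ... e_c(sigma(N-1))>,
  i.e. it maps basis vector c to c o sigma.\<close>
definition perm_op :: "nat \<Rightarrow> nat \<Rightarrow> (nat \<Rightarrow> nat) \<Rightarrow> op" where
  "perm_op d N \<sigma> = (\<lambda>c c'. if c \<in> cfgs d N \<and> c' \<in> cfgs d N \<and> c = c' \<circ> \<sigma> then 1 else 0)"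

inductive_set alg_gen :: "nat \<Rightarrow> nat \<Rightarrow> op set \<Rightarrow> op set" for d N S where
  gen: "A \<in> S \<Longrightarrow> A \<in> alg_gen d N S"
| unit: "op_id d N \<in> alg_gen d N S"
| add: "A \<in> alg_gen d N S \<Longrightarrow> B \<in> alg_gen d N S \<Longrightarrow> (\<lambda>c c'. A c c' + B c c') \<in> alg_gen d N S"
| smult: "A \<in> alg_gen d N S \<Longrightarrow> (\<lambda>c c'. a * A c c') \<in> alg_gen d N S"
| mul: "A \<in> alg_gen d N S \<Longrightarrow> B \<in> alg_gen d N S \<Longrightarrow> op_mul d N A B \<in> alg_gen d N S"

definition perm_span :: "nat \<Rightarrow> nat \<Rightarrow> op set \<Rightarrow> op \<Rightarrow> bool" where
  "perm_span d N S T \<longleftrightarrow> (\<exists>k::nat. \<exists>a::nat \<Rightarrow> complex. \<exists>p::nat \<Rightarrow> op. \<exists>\<sigma>::nat \<Rightarrow> nat \<Rightarrow> nat.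
      (\<forall>j<k. p j \<in> alg_gen d N S \<and> \<sigma> j permutes {..<N}) \<and>
      T = (\<lambda>c c'. \<Sum>j<k. a j * op_mul d N (p j) (perm_op d N (\<sigma> j)) c c'))"

definition diag_mat :: "(nat \<Rightarrow> complex) \<Rightarrow> nat \<Rightarrow> nat \<Rightarrow> complex" where
  "diag_mat v = (\<lambda>a b. if a = b then v a else 0)"

text \<open>H 0, ..., H (d-2) (diagonal entries H i a, a < d) form a basis of the traceless
  diagonal operators on C^d (a Cartan subalgebra basis).\<close>
definition cartan_basis :: "nat \<Rightarrow> (nat \<Rightarrow> nat \<Rightarrow> complex) \<Rightarrow> bool" where
  "cartan_basis d H \<longleftrightarrow>
     (\<forall>i<d-1. (\<Sum>a<d. H i a) = 0) \<and>
     (\<forall>u::nat \<Rightarrow> complex. (\<forall>a<d. (\<Sum>i<d-1. u i * H i a) = 0) \<longrightarrow> (\<forall>i<d-1. u i = 0)) \<and>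
     (\<forall>v::nat \<Rightarrow> complex. (\<Sum>a<d. v a) = 0 \<longrightarrow>
        (\<exists>u::nat \<Rightarrow> complex. \<forall>a<d. v a = (\<Sum>i<d-1. u i * H i a)))"

definition H_site :: "nat \<Rightarrow> nat \<Rightarrow> (nat \<Rightarrow> nat \<Rightarrow> complex) \<Rightarrow> nat \<Rightarrow> nat \<Rightarrow> op" where
  "H_site d N H i x = site_op d N x (diag_mat (H i))"

definition H_tot :: "nat \<Rightarrow> nat \<Rightarrow> (nat \<Rightarrow> nat \<Rightarrow> complex) \<Rightarrow> nat \<Rightarrow> op" where
  "H_tot d N H i = (\<lambda>c c'. \<Sum>x<N. H_site d N H i x c c')"

text \<open>Spin-1/2 operators in the basis |1> = index 0 (spin up), |2> = index 1 (spin down).\<close>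
definition pauli_z :: "nat \<Rightarrow> nat \<Rightarrow> complex" where
  "pauli_z = (\<lambda>a b. if a = 0 \<and> b = 0 then 1 else if a = 1 \<and> b = 1 then -1 else 0)"

definition sigma_plus :: "nat \<Rightarrow> nat \<Rightarrow> complex" where
  "sigma_plus = (\<lambda>a b. if a = 0 \<and> b = 1 then 1 else 0)"

definition sigma_minus :: "nat \<Rightarrow> nat \<Rightarrow> complex" where
  "sigma_minus = (\<lambda>a b. if a = 1 \<and> b = 0 then 1 else 0)"

end

theory Submission
  imports Defs "HOL-Library.Multiset"
begin

definition E :: "cfg \<Rightarrow> cfg \<Rightarrow> op" where
  "E c e = (\<lambda>c1 c2. if c1 = c \<and> c2 = e then 1 else 0)"

definition umat :: "nat \<Rightarrow> nat \<Rightarrow> nat \<Rightarrow> nat \<Rightarrow> complex" where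
  "umat a b = (\<lambda>a' b'. if a' = a \<and> b' = b then 1 else 0)"

lemma sum_single:
  assumes "finite S" "a \<in> S" "\<And>x. x \<in> S \<Longrightarrow> x \<noteq> a \<Longrightarrow> f x = 0"
  shows "sum f S = f a"
proof -
  have "sum f S = f a + sum f (S - {a})" using assms by (simp add: sum.remove)
  also have "sum f (S - {a}) = 0" using assms by (intro sum.neutral) auto
  finally show ?thesis by simp
qed

lemma finite_cfgs: "finite (cfgs d N)"
proof -
  have "cfgs d N \<subseteq> (\<lambda>f x. if x < N then f x else 0) ` ({..<N} \<rightarrow>\<^sub>E {..<d})"
  proof
    fix c assume c: "c \<in> cfgs d N"
    have "c = (\<lambda>x. if x < N then restrict c {..<N} x else 0)"
      using c by (auto simp: cfgs_def fun_eq_iff)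
    moreover have "restrict c {..<N} \<in> {..<N} \<rightarrow>\<^sub>E {..<d}" using c by (auto simp: cfgs_def)
    ultimately show "c \<in> (\<lambda>f x. if x < N then f x else 0) ` ({..<N} \<rightarrow>\<^sub>E {..<d})" by blast
  qed
  moreover have "finite ((\<lambda>f x. if x < N then f x else 0) ` ({..<N} \<rightarrow>\<^sub>E {..<d}))"
    by (intro finite_imageI finite_PiE) auto
  ultimately show ?thesis by (rule finite_subset)
qed

lemma cfgs_comp_perm:
  assumes "\<sigma> permutes {..<N}" "c \<in> cfgs d N"
  shows "c \<circ> \<sigma> \<in> cfgs d N"
proof -
  have "\<sigma> x < N" if "x < N" for x using permutes_in_image[OF assms(1), of x] that by simp
  then show ?thesis using assms unfolding cfgs_def
    by (auto simp: permutes_not_in)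
qed

lemma perm_op_mul:
  assumes "\<sigma> permutes {..<N}"
  shows "op_mul d N p (perm_op d N \<sigma>) = (\<lambda>c1 c2. if c2 \<in> cfgs d N then p c1 (c2 \<circ> \<sigma>) else 0)"
proof (intro ext)
  fix c1 c2
  show "op_mul d N p (perm_op d N \<sigma>) c1 c2 = (if c2 \<in> cfgs d N then p c1 (c2 \<circ> \<sigma>) else 0)"
  proof (cases "c2 \<in> cfgs d N")
    case True
    then have m: "c2 \<circ> \<sigma> \<in> cfgs d N" using cfgs_comp_perm assms by blast
    have "op_mul d N p (perm_op d N \<sigma>) c1 c2 = p c1 (c2 \<circ> \<sigma>) * perm_op d N \<sigma> (c2 \<circ> \<sigma>) c2"
      unfolding op_mul_def
      by (rule sum_single[OF finite_cfgs m]) (auto simp: perm_op_def)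
    then show ?thesis using True m by (simp add: perm_op_def)
  next
    case False
    then show ?thesis by (simp add: op_mul_def perm_op_def)
  qed
qed

lemma E_perm_span:
  assumes "\<sigma> permutes {..<N}" "c \<in> cfgs d N" "c' \<in> cfgs d N"
    "E c (c' \<circ> \<sigma>) \<in> alg_gen d N S"
  shows "perm_span d N S (E c c')"
proof -
  have surj: "surj \<sigma>" using assms(1) permutes_surj by blast
  have eq: "c2 \<circ> \<sigma> = c' \<circ> \<sigma> \<longleftrightarrow> c2 = c'" for c2
  proof
    assume h: "c2 \<circ> \<sigma> = c' \<circ> \<sigma>"
    show "c2 = c'"
    proof
      fix y obtain x where "y = \<sigma> x" using surj by blast
      then show "c2 y = c' y" using h by (metis comp_apply)
    qed
  qed simp
  have "E c c' = (\<lambda>c1 c2. \<Sum>j::nat<1. 1 * op_mul d N ((\<lambda>_. E c (c' \<circ> \<sigma>)) j) (perm_op d N ((\<lambda>_. \<sigma>) j)) c1 c2)"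
  proof (intro ext)
    fix c1 c2
    show "E c c' c1 c2 = (\<Sum>j::nat<1. 1 * op_mul d N ((\<lambda>_. E c (c' \<circ> \<sigma>)) j) (perm_op d N ((\<lambda>_. \<sigma>) j)) c1 c2)"
      using assms(3) unfolding perm_op_mul[OF assms(1)] E_def eq by (auto simp: card_lessThan)
  qed
  then show ?thesis unfolding perm_span_def using assms
    by (intro exI[of _ 1] exI[of _ "\<lambda>_. 1"] exI[of _ "\<lambda>_. E c (c' \<circ> \<sigma>)"] exI[of _ "\<lambda>_. \<sigma>"]) simp
qed


lemma perm_span_zero: "perm_span d N S (\<lambda>_ _. 0)"
  unfolding perm_span_def by (intro exI[of _ 0]) simp

lemma perm_span_smult:
  assumes "perm_span d N S T" shows "perm_span d N S (\<lambda>c c'. \<alpha> * T c c')"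
proof -
  obtain k a p \<sigma> where h: "\<forall>j<k. p j \<in> alg_gen d N S \<and> \<sigma> j permutes {..<N}"
    "T = (\<lambda>c c'. \<Sum>j::nat<k. a j * op_mul d N (p j) (perm_op d N (\<sigma> j)) c c')"
    using assms unfolding perm_span_def by (elim exE conjE) (rule that; assumption)
  have "(\<lambda>c c'. \<alpha> * T c c') = (\<lambda>c c'. \<Sum>j::nat<k. (\<lambda>j. \<alpha> * a j) j * op_mul d N (p j) (perm_op d N (\<sigma> j)) c c')"
    using h(2) by (simp add: sum_distrib_left mult.assoc)
  then show ?thesis unfolding perm_span_def using h(1) by (intro exI[of _ k] exI[of _ "\<lambda>j. \<alpha> * a j"] exI[of _ p] exI[of _ \<sigma>]) simp
qed

lemma perm_span_add:
  assumes "perm_span d N S A" "perm_span d N S B"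
  shows "perm_span d N S (\<lambda>c c'. A c c' + B c c')"
proof -
  obtain k1 a1 p1 s1 where h1: "\<forall>j<k1. p1 j \<in> alg_gen d N S \<and> s1 j permutes {..<N}"
    "A = (\<lambda>c c'. \<Sum>j::nat<k1. a1 j * op_mul d N (p1 j) (perm_op d N (s1 j)) c c')"
    using assms(1) unfolding perm_span_def by (elim exE conjE) (rule that; assumption)
  obtain k2 a2 p2 s2 where h2: "\<forall>j<k2. p2 j \<in> alg_gen d N S \<and> s2 j permutes {..<N}"
    "B = (\<lambda>c c'. \<Sum>j::nat<k2. a2 j * op_mul d N (p2 j) (perm_op d N (s2 j)) c c')"
    using assms(2) unfolding perm_span_def by (elim exE conjE) (rule that; assumption)
  define a where "a j = (if j < k1 then a1 j else a2 (j - k1))" for j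
  define p where "p j = (if j < k1 then p1 j else p2 (j - k1))" for j
  define s where "s j = (if j < k1 then s1 j else s2 (j - k1))" for j
  have P: "\<forall>j<k1+k2. p j \<in> alg_gen d N S \<and> s j permutes {..<N}"
    using h1(1) h2(1) by (auto simp: p_def s_def)
  have split: "(\<Sum>j::nat<k1+k2. f j) = (\<Sum>j::nat<k1. f j) + (\<Sum>j::nat<k2. f (j + k1))" for f :: "nat \<Rightarrow> complex"
  proof -
    have "(\<Sum>j::nat<k1+k2. f j) = (\<Sum>j\<in>{0..<k1}. f j) + (\<Sum>j\<in>{k1..<k1+k2}. f j)"
      by (simp add: atLeast0LessThan[symmetric] sum.atLeastLessThan_concat)
    also have "(\<Sum>j\<in>{k1..<k1+k2}. f j) = (\<Sum>j\<in>{0..<k2}. f (j + k1))"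
      using sum.shift_bounds_nat_ivl[of f 0 k1 k2] by (simp add: add.commute)
    finally show ?thesis by (simp add: atLeast0LessThan)
  qed
  have "(\<lambda>c c'. A c c' + B c c') = (\<lambda>c c'. \<Sum>j::nat<k1+k2. a j * op_mul d N (p j) (perm_op d N (s j)) c c')"
    unfolding split h1(2) h2(2) by (simp add: a_def p_def s_def)
  then show ?thesis unfolding perm_span_def using P by (intro exI[of _ "k1+k2"] exI[of _ a] exI[of _ p] exI[of _ s]) simp
qed

lemma perm_span_sum:
  assumes "finite I" "\<And>i. i \<in> I \<Longrightarrow> perm_span d N S (F i)"
  shows "perm_span d N S (\<lambda>c c'. \<Sum>i\<in>I. F i c c')"
  using assms
proof (induction I rule: finite_induct)
  case empty then show ?case by (simp add: perm_span_zero)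
next
  case (insert x I)
  then show ?case using perm_span_add[of d N S "F x" "\<lambda>c c'. \<Sum>i\<in>I. F i c c'"] by simp
qed

lemma alg_gen_zero: "(\<lambda>_ _. 0) \<in> alg_gen d N S"
  using alg_gen.smult[OF alg_gen.unit, of 0 d N S] by simp

lemma alg_gen_lincomb:
  assumes "finite I" "\<And>i. i \<in> I \<Longrightarrow> A i \<in> alg_gen d N S"
  shows "(\<lambda>c c'. \<Sum>i\<in>I. f i * A i c c') \<in> alg_gen d N S"
  using assms
proof (induction I rule: finite_induct)
  case empty then show ?case by (simp add: alg_gen_zero)
next
  case (insert x I)
  then show ?case
    using alg_gen.add[OF alg_gen.smult[of "A x" d N S "f x"], of "\<lambda>c c'. \<Sum>i\<in>I. f i * A i c c'"] by simp
qed

lemma site_op_cong: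
  assumes "x < N" "\<And>a b. a < d \<Longrightarrow> b < d \<Longrightarrow> M a b = M' a b"
  shows "site_op d N x M = site_op d N x M'"
  using assms by (auto simp: site_op_def cfgs_def fun_eq_iff)

lemma site_op_lincomb:
  "site_op d N x (\<lambda>a b. \<Sum>i\<in>I. f i * M i a b) = (\<lambda>c c'. \<Sum>i\<in>I. f i * site_op d N x (M i) c c')"
proof (intro ext)
  fix c c' :: cfg
  show "site_op d N x (\<lambda>a b. \<Sum>i\<in>I. f i * M i a b) c c' = (\<Sum>i\<in>I. f i * site_op d N x (M i) c c')"
  proof (cases "c \<in> cfgs d N \<and> c' \<in> cfgs d N \<and> (\<forall>y. y \<noteq> x \<longrightarrow> c y = c' y)")
    case True then show ?thesis by (simp add: site_op_def)
  next
    case False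
    then have "\<And>M. site_op d N x M c c' = 0" unfolding site_op_def by auto
    then show ?thesis by simp
  qed
qed

lemma site_op_add:
  "site_op d N x (\<lambda>a b. M a b + M' a b) = (\<lambda>c c'. site_op d N x M c c' + site_op d N x M' c c')"
  by (auto simp: site_op_def fun_eq_iff)

lemma site_op_smult:
  "site_op d N x (\<lambda>a b. \<alpha> * M a b) = (\<lambda>c c'. \<alpha> * site_op d N x M c c')"
  by (auto simp: site_op_def fun_eq_iff)

lemma site_op_id: "site_op d N x (\<lambda>a b. if a = b then 1 else 0) = op_id d N"
proof (intro ext)
  fix c c' :: cfg
  show "site_op d N x (\<lambda>a b. if a = b then 1 else 0) c c' = op_id d N c c'"
  proof (cases "c = c'")
    case True then show ?thesis by (simp add: site_op_def op_id_def)
  next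
    case False
    have "\<not> ((\<forall>y. y \<noteq> x \<longrightarrow> c y = c' y) \<and> c x = c' x)"
    proof
      assume h: "(\<forall>y. y \<noteq> x \<longrightarrow> c y = c' y) \<and> c x = c' x"
      have "c = c'"
      proof
        fix y show "c y = c' y" using h by (cases "y = x") auto
      qed
      with False show False by simp
    qed
    then show ?thesis using False unfolding site_op_def op_id_def by (cases "\<forall>y. y \<noteq> x \<longrightarrow> c y = c' y") simp_all
  qed
qed


lemma prod_E:
  assumes c: "c \<in> cfgs d N" and e: "e \<in> cfgs d N"
    and gen: "\<And>x. x < N \<Longrightarrow> site_op d N x (umat (c x) (e x)) \<in> alg_gen d N S"
  shows "E c e \<in> alg_gen d N S"
proof -
  define Q where "Q n = (\<lambda>c1 c2. if c1 \<in> cfgs d N \<and> c2 \<in> cfgs d N \<and> (\<forall>x<n. c1 x = c x \<and> c2 x = e x)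
       \<and> (\<forall>x. x \<ge> n \<longrightarrow> c1 x = c2 x) then 1 else (0::complex))" for n
  have Q0: "Q 0 = op_id d N"
  proof (intro ext)
    fix c1 c2 :: cfg
    show "Q 0 c1 c2 = op_id d N c1 c2"
      unfolding Q_def op_id_def by (cases "c1 = c2") (auto simp: fun_eq_iff[symmetric])
  qed
  have Qstep: "Q (Suc n) = op_mul d N (Q n) (site_op d N n (umat (c n) (e n)))" if n: "n < N" for n
  proof (intro ext)
    fix c1 c2 :: cfg
    show "Q (Suc n) c1 c2 = op_mul d N (Q n) (site_op d N n (umat (c n) (e n))) c1 c2"
    proof (cases "c1 \<in> cfgs d N \<and> c2 \<in> cfgs d N")
      case True
      define cs where "cs = c2(n := c1 n)"
      have cs: "cs \<in> cfgs d N" using True n unfolding cs_def cfgs_def by auto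
      have "op_mul d N (Q n) (site_op d N n (umat (c n) (e n))) c1 c2
          = Q n c1 cs * site_op d N n (umat (c n) (e n)) cs c2"
        unfolding op_mul_def
      proof (rule sum_single[OF finite_cfgs cs])
        fix c'' assume "c'' \<in> cfgs d N" "c'' \<noteq> cs"
        then have "\<not> ((\<forall>x. x \<ge> n \<longrightarrow> c1 x = c'' x) \<and> (\<forall>y. y \<noteq> n \<longrightarrow> c'' y = c2 y))"
          unfolding cs_def by (auto simp: fun_eq_iff) (metis order_refl)
        then show "Q n c1 c'' * site_op d N n (umat (c n) (e n)) c'' c2 = 0"
          unfolding Q_def site_op_def by auto
      qed
      also have "\<dots> = Q (Suc n) c1 c2"
        using True cs unfolding Q_def site_op_def umat_def cs_def
        by (auto simp: less_Suc_eq le_eq_less_or_eq Suc_le_eq) (metis Suc_lessI)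
      finally show ?thesis by simp
    next
      case False
      then show ?thesis unfolding Q_def op_mul_def site_op_def by auto
    qed
  qed
  have "n \<le> N \<Longrightarrow> Q n \<in> alg_gen d N S" for n
  proof (induction n)
    case 0 then show ?case using Q0 alg_gen.unit by simp
  next
    case (Suc n)
    then show ?case using Qstep[of n] alg_gen.mul gen[of n] by simp
  qed
  then have "Q N \<in> alg_gen d N S" by simp
  moreover have "Q N = E c e"
  proof (intro ext)
    fix c1 c2 :: cfg
    have "c1 = c" if "c1 \<in> cfgs d N" "\<forall>x<N. c1 x = c x" for c1
      using that c by (auto simp: cfgs_def fun_eq_iff) (metis not_le)
    moreover have "c2 = e" if "c2 \<in> cfgs d N" "\<forall>x<N. c2 x = e x" for c2
      using that e by (auto simp: cfgs_def fun_eq_iff) (metis not_le)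
    ultimately show "Q N c1 c2 = E c e c1 c2"
      using c e unfolding Q_def E_def cfgs_def by auto
  qed
  ultimately show ?thesis by simp
qed


lemma site_op_diag:
  "site_op d N x (\<lambda>a b. if a = b then f a else 0) c c' = (if c = c' \<and> c \<in> cfgs d N then f (c x) else 0)"
proof (cases "c = c'")
  case True then show ?thesis by (simp add: site_op_def)
next
  case False
  have "\<not> ((\<forall>y. y \<noteq> x \<longrightarrow> c y = c' y) \<and> c x = c' x)"
  proof
    assume h: "(\<forall>y. y \<noteq> x \<longrightarrow> c y = c' y) \<and> c x = c' x"
    have "c = c'"
    proof
      fix y show "c y = c' y" using h by (cases "y = x") auto
    qed
    with False show False by simp
  qed
  then show ?thesis using False unfolding site_op_def by auto
qed

definition lam :: "nat \<Rightarrow> (nat \<Rightarrow> nat \<Rightarrow> complex) \<Rightarrow> nat \<Rightarrow> cfg \<Rightarrow> complex" where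
  "lam N H i c = (\<Sum>x<N. H i (c x))"

lemma H_tot_eq: "H_tot d N H i c c' = (if c = c' \<and> c \<in> cfgs d N then lam N H i c else 0)"
proof (cases "c = c' \<and> c \<in> cfgs d N")
  case True then show ?thesis unfolding H_tot_def H_site_def diag_mat_def site_op_diag lam_def by simp
next
  case False then show ?thesis unfolding H_tot_def H_site_def diag_mat_def site_op_diag lam_def
    by (simp only: if_not_P[OF False] if_False sum.neutral_const)
qed

lemma comm_lam:
  assumes "op_mul d N T (H_tot d N H i) = op_mul d N (H_tot d N H i) T"
    and c: "c \<in> cfgs d N" and c': "c' \<in> cfgs d N" and nz: "T c c' \<noteq> 0"
  shows "lam N H i c = lam N H i c'"
proof -
  have A: "op_mul d N T (H_tot d N H i) c c' = T c c' * (H_tot d N H i) c' c'"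
    unfolding op_mul_def by (rule sum_single[OF finite_cfgs c']) (auto simp: H_tot_eq)
  have B: "op_mul d N (H_tot d N H i) T c c' = (H_tot d N H i) c c * T c c'"
    unfolding op_mul_def by (rule sum_single[OF finite_cfgs c]) (auto simp: H_tot_eq)
  have "T c c' * H_tot d N H i c' c' = H_tot d N H i c c * T c c'"
    using A B assms(1) by (simp only:)
  then have "T c c' * lam N H i c' = lam N H i c * T c c'"
    by (simp only: H_tot_eq c c' simp_thms if_True)
  then have "T c c' * (lam N H i c' - lam N H i c) = 0" by (simp only: right_diff_distrib mult.commute[of _ "T c c'"] diff_self)
  then show ?thesis using nz by simp
qed

lemma sum_cfg:
  fixes f :: "nat \<Rightarrow> complex"
  assumes "c \<in> cfgs d N"
  shows "(\<Sum>x<N. f (c x)) = (\<Sum>a<d. of_nat (card {x. x < N \<and> c x = a}) * f a)"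
proof -
  have img: "c ` {..<N} \<subseteq> {..<d}" using assms by (auto simp: cfgs_def)
  have "(\<Sum>x<N. f (c x)) = (\<Sum>a<d. \<Sum>x\<in>{x. x \<in> {..<N} \<and> c x = a}. f (c x))"
    using sum.group[OF finite_lessThan finite_lessThan img, of "\<lambda>x. f (c x)"] by simp
  also have "\<dots> = (\<Sum>a<d. of_nat (card {x. x < N \<and> c x = a}) * f a)"
  proof (rule sum.cong[OF refl])
    fix a
    have "(\<Sum>x\<in>{x. x \<in> {..<N} \<and> c x = a}. f (c x)) = (\<Sum>x\<in>{x. x < N \<and> c x = a}. f a)"
      by (rule sum.cong) auto
    then show "(\<Sum>x\<in>{x. x \<in> {..<N} \<and> c x = a}. f (c x)) = of_nat (card {x. x < N \<and> c x = a}) * f a"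
      by simp
  qed
  finally show ?thesis .
qed

lemma count_map: "count (mset (map c [0..<N])) a = card {i. i < N \<and> c i = a}"
proof -
  have 1: "length (replicate (count (mset (map c [0..<N])) a) a) = length (filter ((=) a) (map c [0..<N]))"
    by (simp only: replicate_count_mset_eq_filter_eq)
  have 2: "length (filter ((=) a) (map c [0..<N])) = card {i. i < length (map c [0..<N]) \<and> a = (map c [0..<N]) ! i}"
    by (rule length_filter_conv_card)
  have 3: "{i. i < length (map c [0..<N]) \<and> a = (map c [0..<N]) ! i} = {i. i < N \<and> c i = a}"
    by auto
  show ?thesis using 1 2 3 by (simp only: length_replicate)
qed

lemma perm_of_counts:
  assumes c: "c \<in> cfgs d N" and c': "c' \<in> cfgs d N"
    and cnt: "\<And>a. a < d \<Longrightarrow> card {i. i < N \<and> c i = a} = card {i. i < N \<and> c' i = a}"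
  obtains \<sigma> where "\<sigma> permutes {..<N}" "c = c' \<circ> \<sigma>"
proof -
  have "mset (map c [0..<N]) = mset (map c' [0..<N])"
  proof (rule multiset_eqI)
    fix a
    show "count (mset (map c [0..<N])) a = count (mset (map c' [0..<N])) a"
    proof (cases "a < d")
      case True then show ?thesis unfolding count_map using cnt by simp
    next
      case False
      then have e1: "{i. i < N \<and> c i = a} = {}" and e2: "{i. i < N \<and> c' i = a} = {}"
        using c c' by (auto simp: cfgs_def)
      show ?thesis unfolding count_map e1 e2 by simp
    qed
  qed
  then obtain p where p: "p permutes {..<length (map c' [0..<N])}"
    "permute_list p (map c' [0..<N]) = map c [0..<N]"
    by (rule mset_eq_permutation)
  have pN: "p permutes {..<N}" using p(1) by simp
  have "c = c' \<circ> p"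
  proof
    fix x
    show "c x = (c' \<circ> p) x"
    proof (cases "x < N")
      case True
      have "p x < N" using permutes_in_image[OF pN, of x] True by simp
      then have "permute_list p (map c' [0..<N]) ! x = c' (p x)"
        using True by (simp add: permute_list_nth[OF p(1)])
      moreover have "map c [0..<N] ! x = c x" using True by simp
      ultimately show ?thesis using p(2) by simp
    next
      case False
      then have "p x = x" using permutes_not_in[OF pN] by simp
      then show ?thesis using False c c' by (simp add: cfgs_def)
    qed
  qed
  then show ?thesis by (rule that[OF pN])
qed


lemma counts_eq:
  assumes cb: "cartan_basis d H" and c: "c \<in> cfgs d N" and c': "c' \<in> cfgs d N"
    and lq: "\<forall>i<d-1. lam N H i c = lam N H i c'"
    and a: "a < d"
  shows "card {x. x < N \<and> c x = a} = card {x. x < N \<and> c' x = a}"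
proof -
  define nc where "nc a = card {x. x < N \<and> c x = a}" for a
  define nc' where "nc' a = card {x. x < N \<and> c' x = a}" for a
  define r where "r a = real (nc a) - real (nc' a)" for a
  define w where "w a = complex_of_real (r a)" for a
  have w_eq: "w a = of_nat (nc a) - of_nat (nc' a)" for a unfolding w_def r_def by simp
  have hw: "(\<Sum>a<d. w a * H i a) = 0" if i: "i < d - 1" for i
  proof -
    have "(\<Sum>a<d. w a * H i a) = (\<Sum>a<d. of_nat (nc a) * H i a) - (\<Sum>a<d. of_nat (nc' a) * H i a)"
      unfolding w_eq by (simp add: left_diff_distrib sum_subtractf)
    also have "\<dots> = lam N H i c - lam N H i c'"
      unfolding lam_def nc_def nc'_def using sum_cfg[OF c, of "H i"] sum_cfg[OF c', of "H i"] by simp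
    also have "\<dots> = 0" using lq i by simp
    finally show ?thesis .
  qed
  have sw: "(\<Sum>a<d. w a) = 0"
  proof -
    have "(\<Sum>a<d. w a) = (\<Sum>a<d. of_nat (nc a) * (1::complex)) - (\<Sum>a<d. of_nat (nc' a) * (1::complex))"
      unfolding w_eq by (simp add: sum_subtractf)
    also have "\<dots> = (\<Sum>x<N. (1::complex)) - (\<Sum>x<N. (1::complex))"
      unfolding nc_def nc'_def using sum_cfg[OF c, of "\<lambda>_. 1"] sum_cfg[OF c', of "\<lambda>_. 1"] by simp
    finally show ?thesis by simp
  qed
  obtain u where u: "\<forall>b<d. w b = (\<Sum>i<d-1. u i * H i b)"
    using cb sw unfolding cartan_basis_def by blast
  have "(\<Sum>b<d. w b * w b) = (\<Sum>b<d. w b * (\<Sum>i<d-1. u i * H i b))"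
    using u by (intro sum.cong) auto
  also have "\<dots> = (\<Sum>i<d-1. u i * (\<Sum>b<d. w b * H i b))"
    by (simp add: sum_distrib_left sum.swap[of _ "{..<d}"] mult_ac)
  also have "\<dots> = 0" using hw by simp
  finally have "(\<Sum>b<d. w b * w b) = 0" .
  then have "complex_of_real (\<Sum>b<d. r b * r b) = 0" unfolding w_def by simp
  then have "(\<Sum>b<d. r b * r b) = 0" by (simp only: of_real_eq_0_iff)
  then have "\<forall>b\<in>{..<d}. r b * r b = 0"
    by (subst sum_nonneg_eq_0_iff[symmetric]) auto
  then have "r a = 0" using a by simp
  then show ?thesis unfolding r_def nc_def nc'_def by simp
qed

lemma gen1:
  assumes cb: "cartan_basis d H" and x: "x < N" and a: "a < d"
  shows "site_op d N x (umat a a) \<in> alg_gen d N {H_site d N H i x | i x. i < d-1 \<and> x < N}"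
proof -
  define v where "v b = (if b = a then 1 else 0) - 1 / (of_nat d :: complex)" for b :: nat
  have dpos: "(of_nat d :: complex) \<noteq> 0" using a by simp
  have "(\<Sum>b<d. v b) = 1 - of_nat d * (1 / of_nat d)"
    unfolding v_def using a by (simp add: sum_subtractf)
  also have "\<dots> = 0" using dpos by simp
  finally have "(\<Sum>b<d. v b) = 0" .
  then obtain u where u: "\<forall>b<d. v b = (\<Sum>i<d-1. u i * H i b)"
    using cb unfolding cartan_basis_def by blast
  define M where "M = (\<lambda>b b'. (1 / of_nat d) * (if b = b' then 1 else 0) + (\<Sum>i\<in>{..<d-1}. u i * diag_mat (H i) b b'))"
  have "site_op d N x (umat a a) = site_op d N x M"
  proof (rule site_op_cong[OF x])
    fix b b' assume b: "b < d" "b' < d"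
    show "umat a a b b' = M b b'"
    proof (cases "b = b'")
      case True
      have "(\<Sum>i\<in>{..<d-1}. u i * diag_mat (H i) b b) = v b"
        using u b by (simp add: diag_mat_def)
      then show ?thesis using True dpos unfolding M_def umat_def v_def by simp
    next
      case False then show ?thesis unfolding M_def umat_def diag_mat_def by simp
    qed
  qed
  also have "\<dots> = (\<lambda>c c'. (1 / of_nat d) * op_id d N c c' + (\<Sum>i\<in>{..<d-1}. u i * H_site d N H i x c c'))"
    unfolding M_def site_op_add site_op_smult site_op_lincomb site_op_id H_site_def by simp
  also have "\<dots> \<in> alg_gen d N {H_site d N H i x | i x. i < d-1 \<and> x < N}"
    by (intro alg_gen.add alg_gen.smult alg_gen.unit alg_gen_lincomb finite_lessThan alg_gen.gen)
       (use x in auto)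
  finally show ?thesis .
qed

lemma decomp:
  assumes "is_op d N T"
  shows "T = (\<lambda>c1 c2. \<Sum>q\<in>cfgs d N \<times> cfgs d N. T (fst q) (snd q) * E (fst q) (snd q) c1 c2)"
proof (intro ext)
  fix c1 c2 :: cfg
  show "T c1 c2 = (\<Sum>q\<in>cfgs d N \<times> cfgs d N. T (fst q) (snd q) * E (fst q) (snd q) c1 c2)"
  proof (cases "c1 \<in> cfgs d N \<and> c2 \<in> cfgs d N")
    case True
    have "(\<Sum>q\<in>cfgs d N \<times> cfgs d N. T (fst q) (snd q) * E (fst q) (snd q) c1 c2)
        = T (fst (c1, c2)) (snd (c1, c2)) * E (fst (c1, c2)) (snd (c1, c2)) c1 c2"
      by (rule sum_single) (use True finite_cfgs in \<open>auto simp: E_def\<close>)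
    then show ?thesis by (simp add: E_def)
  next
    case False
    then have "T c1 c2 = 0" using assms unfolding is_op_def by blast
    moreover have "E (fst q) (snd q) c1 c2 = 0" if "q \<in> cfgs d N \<times> cfgs d N" for q
      using that False by (auto simp: E_def)
    ultimately show ?thesis by simp
  qed
qed


lemma perm_span_term:
  assumes "T c c' \<noteq> 0 \<Longrightarrow> perm_span d N S (E c c')"
  shows "perm_span d N S (\<lambda>c1 c2. T c c' * E c c' c1 c2)"
proof (cases "T c c' = 0")
  case True then show ?thesis by (simp add: perm_span_zero)
next
  case False then show ?thesis using perm_span_smult[OF assms] by simp
qed

lemma part1:
  assumes cb: "cartan_basis d H" and T: "is_op d N T"
    and comm: "\<forall>i<d-1. op_mul d N T (H_tot d N H i) = op_mul d N (H_tot d N H i) T"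
  shows "perm_span d N {H_site d N H i x | i x. i < d-1 \<and> x < N} T"
proof -
  let ?S = "{H_site d N H i x | i x. i < d-1 \<and> x < N}"
  have "perm_span d N ?S (\<lambda>c1 c2. \<Sum>q\<in>cfgs d N \<times> cfgs d N. T (fst q) (snd q) * E (fst q) (snd q) c1 c2)"
  proof (rule perm_span_sum)
    show "finite (cfgs d N \<times> cfgs d N)" using finite_cfgs by simp
  next
    fix q assume q: "q \<in> cfgs d N \<times> cfgs d N"
    obtain c c' where qq: "q = (c, c')" by (cases q)
    have cc: "(c, c') \<in> cfgs d N \<times> cfgs d N" using q qq by simp
    have c: "c \<in> cfgs d N" using cc by (rule SigmaD1)
    have c': "c' \<in> cfgs d N" using cc by (rule SigmaD2)
    have "perm_span d N ?S (\<lambda>c1 c2. T c c' * E c c' c1 c2)"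
    proof (rule perm_span_term[of T c c'])
      assume nz: "T c c' \<noteq> 0"
      have lq: "\<forall>i<d-1. lam N H i c = lam N H i c'"
      proof (intro allI impI)
        fix i assume i: "i < d - 1"
        have ci: "op_mul d N T (H_tot d N H i) = op_mul d N (H_tot d N H i) T" by (rule comm[rule_format, OF i])
        show "lam N H i c = lam N H i c'" using comm_lam[of d N T H i c c'] ci c c' nz by blast
      qed
      have "\<And>a. a < d \<Longrightarrow> card {x. x < N \<and> c x = a} = card {x. x < N \<and> c' x = a}"
        using counts_eq[OF cb c c' lq] by blast
      then obtain \<sigma> where s: "\<sigma> permutes {..<N}" "c = c' \<circ> \<sigma>"
        using perm_of_counts[OF c c'] by blast
      have "E c c \<in> alg_gen d N ?S"
      proof (rule prod_E[OF c c])
        fix x assume x: "x < N"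
        then have "c x < d" using c by (simp add: cfgs_def)
        then show "site_op d N x (umat (c x) (c x)) \<in> alg_gen d N ?S" using gen1[OF cb x] by blast
      qed
      then have "E c (c' \<circ> \<sigma>) \<in> alg_gen d N ?S" using s(2) by simp
      then show "perm_span d N ?S (E c c')" by (rule E_perm_span[OF s(1) c c'])
    qed
    then show "perm_span d N ?S (\<lambda>c1 c2. T (fst q) (snd q) * E (fst q) (snd q) c1 c2)"
      using qq by simp
  qed
  then show ?thesis using decomp[OF T] by simp
qed


lemma gen_diag2:
  assumes x: "x < N" and a: "a < 2" and S: "{site_op 2 N x pauli_z | x. x < N} \<subseteq> S"
  shows "site_op 2 N x (umat a a) \<in> alg_gen 2 N S"
proof -
  define s :: complex where "s = (if a = 0 then 1/2 else -1/2)"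
  have "site_op 2 N x (umat a a) = site_op 2 N x (\<lambda>b b'. (1/2) * (if b = b' then 1 else 0) + s * pauli_z b b')"
  proof (rule site_op_cong[OF x])
    fix b b' :: nat assume "b < 2" "b' < 2"
    then show "umat a a b b' = (1/2) * (if b = b' then 1 else 0) + s * pauli_z b b'"
      using a unfolding umat_def pauli_z_def s_def by (auto simp: less_2_cases_iff)
  qed
  also have "\<dots> = (\<lambda>c c'. (1/2) * op_id 2 N c c' + s * site_op 2 N x pauli_z c c')"
    unfolding site_op_add site_op_smult site_op_id by simp
  also have "\<dots> \<in> alg_gen 2 N S"
    by (intro alg_gen.add alg_gen.smult alg_gen.unit alg_gen.gen) (use x S in auto)
  finally show ?thesis .
qed

lemma gen_plus:
  assumes x: "x < N" and a: "a < 2" and b: "b < 2" and ab: "\<not> (a = 1 \<and> b = 0)"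
  shows "site_op 2 N x (umat a b) \<in> alg_gen 2 N ({site_op 2 N x pauli_z | x. x < N} \<union> {site_op 2 N x sigma_plus | x. x < N})"
proof (cases "a = b")
  case True then show ?thesis using gen_diag2[OF x a] by blast
next
  case False
  then have "a = 0" "b = 1" using a b ab by auto
  then have "umat a b = sigma_plus" unfolding umat_def sigma_plus_def by simp
  then show ?thesis using x by (auto intro: alg_gen.gen)
qed

lemma gen_minus:
  assumes x: "x < N" and a: "a < 2" and b: "b < 2" and ab: "\<not> (a = 0 \<and> b = 1)"
  shows "site_op 2 N x (umat a b) \<in> alg_gen 2 N ({site_op 2 N x pauli_z | x. x < N} \<union> {site_op 2 N x sigma_minus | x. x < N})"
proof (cases "a = b")
  case True then show ?thesis using gen_diag2[OF x a] by blast
next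
  case False
  then have "a = 1" "b = 0" using a b ab by auto
  then have "umat a b = sigma_minus" unfolding umat_def sigma_minus_def by simp
  then show ?thesis using x by (auto intro: alg_gen.gen)
qed

lemma card01:
  assumes c: "c \<in> cfgs 2 N" and v: "v < 2"
  shows "card {x. x < N \<and> c x = 1 - v} = N - card {x. x < N \<and> c x = v}"
proof -
  have "{x. x < N \<and> c x = 1 - v} = {..<N} - {x. x < N \<and> c x = v}"
    using c v by (auto simp: cfgs_def less_2_cases_iff)
  moreover have "{x. x < N \<and> c x = v} \<subseteq> {..<N}" by auto
  ultimately show ?thesis by (simp add: card_Diff_subset finite_subset)
qed

lemma perm2:
  assumes c: "c \<in> cfgs 2 N" and c': "c' \<in> cfgs 2 N" and v: "v < 2"
    and le: "card {x. x < N \<and> c' x = v} \<le> card {x. x < N \<and> c x = v}"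
  obtains \<sigma> where "\<sigma> permutes {..<N}" "\<And>x. x < N \<Longrightarrow> c' (\<sigma> x) = v \<Longrightarrow> c x = v"
proof -
  obtain S where S: "S \<subseteq> {x. x < N \<and> c x = v}" "card S = card {x. x < N \<and> c' x = v}" "finite S"
    using obtain_subset_with_card_n[OF le] by blast
  define e where "e x = (if x < N then (if x \<in> S then v else 1 - v) else 0)" for x
  have e: "e \<in> cfgs 2 N" using v unfolding cfgs_def e_def by auto
  have nv: "1 - v \<noteq> v" using v by (cases v) auto
  have ev: "{x. x < N \<and> e x = v} = S" using S(1) nv unfolding e_def by auto
  have cnt: "card {i. i < N \<and> e i = a} = card {i. i < N \<and> c' i = a}" if a: "a < 2" for a
  proof -
    have "a = v \<or> a = 1 - v" using a v by auto
    then show ?thesis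
    proof
      assume "a = v" then show ?thesis using ev S(2) by simp
    next
      assume av: "a = 1 - v"
      show ?thesis unfolding av card01[OF e v] card01[OF c' v] ev S(2) ..
    qed
  qed
  obtain \<sigma> where s: "\<sigma> permutes {..<N}" "e = c' \<circ> \<sigma>"
    using perm_of_counts[OF e c' cnt] by blast
  show ?thesis
  proof (rule that[OF s(1)])
    fix x assume x: "x < N" and h: "c' (\<sigma> x) = v"
    then have "e x = v" using s(2) by simp
    then have "x \<in> S" using x nv unfolding e_def by (auto split: if_splits)
    then show "c x = v" using S(1) by auto
  qed
qed


lemma perm_span_if:
  assumes "g \<Longrightarrow> perm_span d N S F"
  shows "perm_span d N S (\<lambda>c1 c2. if g then F c1 c2 else 0)"
  using assms by (cases g) (simp_all add: perm_span_zero)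

lemma perm_span_ifn:
  assumes "\<not> g \<Longrightarrow> perm_span d N S F"
  shows "perm_span d N S (\<lambda>c1 c2. if g then 0 else F c1 c2)"
  using assms by (cases g) (simp_all add: perm_span_zero)

lemma part2:
  assumes T: "is_op 2 N T"
  shows "\<exists>Tp Tm. T = (\<lambda>c c'. Tp c c' + Tm c c') \<and>
               perm_span 2 N ({site_op 2 N x pauli_z | x. x < N} \<union> {site_op 2 N x sigma_plus | x. x < N}) Tp \<and>
               perm_span 2 N ({site_op 2 N x pauli_z | x. x < N} \<union> {site_op 2 N x sigma_minus | x. x < N}) Tm"
proof -
  let ?Sp = "{site_op 2 N x pauli_z | x. x < N} \<union> {site_op 2 N x sigma_plus | x. x < N}"
  let ?Sm = "{site_op 2 N x pauli_z | x. x < N} \<union> {site_op 2 N x sigma_minus | x. x < N}"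
  let ?C = "cfgs 2 N \<times> cfgs 2 N"
  define good where "good q = (card {x. x < N \<and> snd q x = 0} \<le> card {x. x < N \<and> fst q x = 0})" for q :: "cfg \<times> cfg"
  define F where "F q = (\<lambda>c1 c2. T (fst q) (snd q) * E (fst q) (snd q) c1 c2)" for q
  define Tp where "Tp = (\<lambda>c1 c2. \<Sum>q\<in>?C. (\<lambda>c1 c2. if good q then F q c1 c2 else 0) c1 c2)"
  define Tm where "Tm = (\<lambda>c1 c2. \<Sum>q\<in>?C. (\<lambda>c1 c2. if good q then 0 else F q c1 c2) c1 c2)"
  have fin: "finite ?C" using finite_cfgs by simp
  have "T = (\<lambda>c1 c2. \<Sum>q\<in>?C. F q c1 c2)" unfolding F_def by (rule decomp[OF T])
  also have "\<dots> = (\<lambda>c c'. Tp c c' + Tm c c')"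
  proof (intro ext)
    fix c1 c2
    show "(\<Sum>q\<in>?C. F q c1 c2) = Tp c1 c2 + Tm c1 c2"
      unfolding Tp_def Tm_def sum.distrib[symmetric] by (rule sum.cong) auto
  qed
  finally have dec: "T = (\<lambda>c c'. Tp c c' + Tm c c')" .
  have "perm_span 2 N ?Sp Tp" unfolding Tp_def
  proof (rule perm_span_sum[OF fin])
    fix q assume q: "q \<in> ?C"
    obtain c c' where qq: "q = (c, c')" by (cases q)
    have cc: "(c, c') \<in> ?C" using q qq by simp
    have c: "c \<in> cfgs 2 N" using cc by (rule SigmaD1)
    have c': "c' \<in> cfgs 2 N" using cc by (rule SigmaD2)
    show "perm_span 2 N ?Sp (\<lambda>c1 c2. if good q then F q c1 c2 else 0)"
    proof (rule perm_span_if)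
      assume g: "good q"
      then have le: "card {x. x < N \<and> c' x = 0} \<le> card {x. x < N \<and> c x = 0}"
        unfolding good_def qq by simp
      obtain \<sigma> where s: "\<sigma> permutes {..<N}" "\<And>x. x < N \<Longrightarrow> c' (\<sigma> x) = 0 \<Longrightarrow> c x = 0"
        using perm2[OF c c' _ le] by auto
      have e: "c' \<circ> \<sigma> \<in> cfgs 2 N" by (rule cfgs_comp_perm[OF s(1) c'])
      have "E c (c' \<circ> \<sigma>) \<in> alg_gen 2 N ?Sp"
      proof (rule prod_E[OF c e])
        fix x assume x: "x < N"
        have a: "c x < 2" using c x by (simp add: cfgs_def)
        have b: "(c' \<circ> \<sigma>) x < 2" using e x by (simp add: cfgs_def)
        have ab: "\<not> (c x = 1 \<and> (c' \<circ> \<sigma>) x = 0)"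
        proof
          assume h: "c x = 1 \<and> (c' \<circ> \<sigma>) x = 0"
          then have "c x = 0" using s(2)[OF x] by simp
          then show False using h by simp
        qed
        show "site_op 2 N x (umat (c x) ((c' \<circ> \<sigma>) x)) \<in> alg_gen 2 N ?Sp"
          by (rule gen_plus[OF x a b ab])
      qed
      then have "perm_span 2 N ?Sp (E c c')" by (rule E_perm_span[OF s(1) c c'])
      then have "perm_span 2 N ?Sp (\<lambda>c1 c2. T c c' * E c c' c1 c2)" by (rule perm_span_smult)
      then show "perm_span 2 N ?Sp (F q)" unfolding F_def qq by simp
    qed
  qed
  moreover have "perm_span 2 N ?Sm Tm" unfolding Tm_def
  proof (rule perm_span_sum[OF fin])
    fix q assume q: "q \<in> ?C"
    obtain c c' where qq: "q = (c, c')" by (cases q)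
    have cc: "(c, c') \<in> ?C" using q qq by simp
    have c: "c \<in> cfgs 2 N" using cc by (rule SigmaD1)
    have c': "c' \<in> cfgs 2 N" using cc by (rule SigmaD2)
    show "perm_span 2 N ?Sm (\<lambda>c1 c2. if good q then 0 else F q c1 c2)"
    proof (rule perm_span_ifn)
      assume g: "\<not> good q"
      then have lt: "card {x. x < N \<and> c x = 0} < card {x. x < N \<and> c' x = 0}"
        unfolding good_def qq by simp
      have b1: "card {x. x < N \<and> c x = 1 - 0} = N - card {x. x < N \<and> c x = 0}"
        by (rule card01[OF c]) simp
      have b2: "card {x. x < N \<and> c' x = 1 - 0} = N - card {x. x < N \<and> c' x = 0}"
        by (rule card01[OF c']) simp
      have "card {x. x < N \<and> c' x = 0} \<le> N"
        by (rule order_trans[OF card_mono[of "{..<N}"]]) auto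
      then have le: "card {x. x < N \<and> c' x = 1} \<le> card {x. x < N \<and> c x = 1}"
        using b1 b2 lt by simp
      obtain \<sigma> where s: "\<sigma> permutes {..<N}" "\<And>x. x < N \<Longrightarrow> c' (\<sigma> x) = 1 \<Longrightarrow> c x = 1"
        using perm2[OF c c' _ le] by auto
      have e: "c' \<circ> \<sigma> \<in> cfgs 2 N" by (rule cfgs_comp_perm[OF s(1) c'])
      have "E c (c' \<circ> \<sigma>) \<in> alg_gen 2 N ?Sm"
      proof (rule prod_E[OF c e])
        fix x assume x: "x < N"
        have a: "c x < 2" using c x by (simp add: cfgs_def)
        have b: "(c' \<circ> \<sigma>) x < 2" using e x by (simp add: cfgs_def)
        have ab: "\<not> (c x = 0 \<and> (c' \<circ> \<sigma>) x = 1)"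
        proof
          assume h: "c x = 0 \<and> (c' \<circ> \<sigma>) x = 1"
          then have "c x = 1" using s(2)[OF x] by simp
          then show False using h by simp
        qed
        show "site_op 2 N x (umat (c x) ((c' \<circ> \<sigma>) x)) \<in> alg_gen 2 N ?Sm"
          by (rule gen_minus[OF x a b ab])
      qed
      then have "perm_span 2 N ?Sm (E c c')" by (rule E_perm_span[OF s(1) c c'])
      then have "perm_span 2 N ?Sm (\<lambda>c1 c2. T c c' * E c c' c1 c2)" by (rule perm_span_smult)
      then show "perm_span 2 N ?Sm (F q)" unfolding F_def qq by simp
    qed
  qed
  ultimately show ?thesis using dec by blast
qed

theorem lemma6p1:
  shows "(\<forall>(d::nat) (N::nat) H T.
            cartan_basis d H \<and> is_op d N T \<and>
            (\<forall>i<d-1. op_mul d N T (H_tot d N H i) = op_mul d N (H_tot d N H i) T)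
            \<longrightarrow> perm_span d N {H_site d N H i x | i x. i < d-1 \<and> x < N} T)
       \<and> (\<forall>(N::nat) T. is_op 2 N T \<longrightarrow>
            (\<exists>Tp Tm. T = (\<lambda>c c'. Tp c c' + Tm c c') \<and>
               perm_span 2 N ({site_op 2 N x pauli_z | x. x < N} \<union> {site_op 2 N x sigma_plus | x. x < N}) Tp \<and>
               perm_span 2 N ({site_op 2 N x pauli_z | x. x < N} \<union> {site_op 2 N x sigma_minus | x. x < N}) Tm))"
  using part1 part2 by blast

end
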